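(* Let $N\ge2$, $\hbar>0$, $\lambda\in\mathbb{R}^N$, $\mu^{(N)}_i=-\imath\hbar^{-1}\lambda_i-\frac12(N-2i+1)$, and let $\xi^{(i)}_R,\xi^{(i)}_L$ ($i=1,\dots,N-1$) be nonzero complex numbers. Consider functions of the real variables $T_{k,i}$, $1\le i\le k\le N-1$, with the convention $T_{N,i}=0$, and the first order differential operators $$E^{(N)}_{i,i+1}=\sum_{n=1}^i\Big(\sum_{k=n}^ie^{T_{N+k-i,k}-T_{N+k-i-1,k}}\Big)\Big(\frac{\partial}{\partial T_{N+n-i-1,n}}-\frac{\partial}{\partial T_{N+n-i-1,n-1}}\Big),$$ $$E^{(N)}_{i+1,i}=\sum_{k=i}^{N-1}e^{T_{k,i}-T_{k+1,i+1}}\Big(\mu^{(N)}_i-\mu^{(N)}_{i+1}+\sum_{s=i}^k\Big(\frac{\partial}{\partial T_{s,i+1}}-\frac{\partial}{\partial T_{s,i}}\Big)\Big),$$ for $i=1,\dots,N-1$ (derivatives with respect to symbols $T_{k,j}$ with $j>k$ or $j=0$ are omitted, empty sums are zero). Then the functions $$\psi^{(N)}_R=\exp\Big\{\sum_{i=1}^{N-1}\xi^{(i)}_R\sum_{k=i}^{N-1}e^{T_{k,i}-T_{k+1,i+1}}\Big\},$$ $$\psi^{(N)}_L=\exp\Big\{\sum_{k=1}^{N-1}\sum_{i=1}^k(\mu^{(N)}_k-\mu^{(N)}_{k+1})T_{k,i}+\sum_{i=1}^{N-1}\xi^{(i)}_L\sum_{k=1}^{N-i}e^{T_{k+i,k}-T_{k+i-1,k}}\Big\}$$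 satisfy, for all $i=1,\dots,N-1$, $$E^{(N)}_{i,i+1}\psi^{(N)}_R=\xi^{(i)}_R\psi^{(N)}_R,\qquad E^{(N)}_{i+1,i}\psi^{(N)}_L=\xi^{(N-i)}_L\psi^{(N)}_L.$$
   Context: These operators are the images of the simple root generators of $\mathfrak{gl}(N)$ in the principal series representation realized on functions of the totally positive unipotent upper-triangular matrices, parametrized by the coordinates $T_{k,i}$ ($1\le i\le k\le N-1$, $T_{N,i}=0$) via $x(T)=\tilde U_2U_2^{-1}\cdots\tilde U_{N-1}U_{N-1}^{-1}\tilde U_N$ with $U_k=\sum_{i\le k}e^{T_{k,i}}e_{i,i}+\sum_{i>k}e_{i,i}$, $\tilde U_k=U_k+\sum_{i=1}^{k-1}e^{T_{k-1,i}}e_{i,i+1}$. *)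

theory Defs
  imports "HOL-Analysis.Analysis"
begin

text \<open>Points are functions T :: nat => nat => real; only the coordinates T k i with
  1 <= i <= k <= N-1 are variables. Tc implements the convention T_{N,i} = 0.\<close>

definition Tc :: "nat \<Rightarrow> (nat \<Rightarrow> nat \<Rightarrow> real) \<Rightarrow> nat \<Rightarrow> nat \<Rightarrow> real" where
  "Tc N T k i = (if 1 \<le> i \<and> i \<le> k \<and> k < N then T k i else 0)"

definition pd :: "nat \<Rightarrow> nat \<Rightarrow> nat \<Rightarrow> ((nat \<Rightarrow> nat \<Rightarrow> real) \<Rightarrow> complex)
                   \<Rightarrow> (nat \<Rightarrow> nat \<Rightarrow> real) \<Rightarrow> complex" where
  "pd N k j f T = (if 1 \<le> j \<and> j \<le> k \<and> k < N
      then vector_derivative (\<lambda>t::real. f (T(k := (T k)(j := t)))) (at (T k j))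
      else 0)"

definition mu :: "nat \<Rightarrow> real \<Rightarrow> (nat \<Rightarrow> real) \<Rightarrow> nat \<Rightarrow> complex" where
  "mu N hbar lam i = - \<i> * complex_of_real (lam i / hbar)
                     - complex_of_real ((real N - 2 * real i + 1) / 2)"

definition E_up :: "nat \<Rightarrow> nat \<Rightarrow> ((nat \<Rightarrow> nat \<Rightarrow> real) \<Rightarrow> complex)
                    \<Rightarrow> (nat \<Rightarrow> nat \<Rightarrow> real) \<Rightarrow> complex" where
  "E_up N i f T = (\<Sum>n = 1..i.
      (\<Sum>k = n..i. complex_of_real (exp (Tc N T (N + k - i) k - Tc N T (N + k - i - 1) k)))
      * (pd N (N + n - i - 1) n f T - pd N (N + n - i - 1) (n - 1) f T))"

definition E_down :: "nat \<Rightarrow> real \<Rightarrow> (nat \<Rightarrow> real) \<Rightarrow> nat \<Rightarrow> ((nat \<Rightarrow> nat \<Rightarrow> real) \<Rightarrow> complex)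
                    \<Rightarrow> (nat \<Rightarrow> nat \<Rightarrow> real) \<Rightarrow> complex" where
  "E_down N hbar lam i f T = (\<Sum>k = i..N - 1.
      complex_of_real (exp (Tc N T k i - Tc N T (k + 1) (i + 1)))
      * ((mu N hbar lam i - mu N hbar lam (i + 1)) * f T
         + (\<Sum>s = i..k. pd N s (i + 1) f T - pd N s i f T)))"

definition psiR :: "nat \<Rightarrow> (nat \<Rightarrow> complex) \<Rightarrow> (nat \<Rightarrow> nat \<Rightarrow> real) \<Rightarrow> complex" where
  "psiR N xiR T = exp (\<Sum>i = 1..N - 1. xiR i *
      (\<Sum>k = i..N - 1. complex_of_real (exp (Tc N T k i - Tc N T (k + 1) (i + 1)))))"

definition psiL :: "nat \<Rightarrow> real \<Rightarrow> (nat \<Rightarrow> real) \<Rightarrow> (nat \<Rightarrow> complex)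
                    \<Rightarrow> (nat \<Rightarrow> nat \<Rightarrow> real) \<Rightarrow> complex" where
  "psiL N hbar lam xiL T = exp (
      (\<Sum>k = 1..N - 1. \<Sum>i = 1..k.
          (mu N hbar lam k - mu N hbar lam (k + 1)) * complex_of_real (Tc N T k i))
    + (\<Sum>i = 1..N - 1. xiL i *
          (\<Sum>k = 1..N - i. complex_of_real (exp (Tc N T (k + i) k - Tc N T (k + i - 1) k)))))"

end

theory Submission imports Defs begin

definition dl :: "nat \<Rightarrow> nat \<Rightarrow> nat \<Rightarrow> nat \<Rightarrow> real" where
  "dl k j a b = (if a = k \<and> b = j then 1 else 0)"

lemma Tc_upd:
  assumes "1 \<le> j" "j \<le> k" "k < N"
  shows "Tc N (T(k := (T k)(j := t))) a b = Tc N T a b + dl k j a b * (t - T k j)"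
  using assms by (auto simp: Tc_def dl_def)

lemma pd_exp:
  assumes v: "1 \<le> j" "j \<le> k" "k < N"
    and D: "((\<lambda>t. \<Phi> (T(k := (T k)(j := t)))) has_vector_derivative D) (at (T k j))"
  shows "pd N k j (\<lambda>T. exp (\<Phi> T)) T = exp (\<Phi> T) * D"
proof -
  have "((exp \<circ> (\<lambda>t. \<Phi> (T(k := (T k)(j := t))))) has_vector_derivative (D * exp (\<Phi> T))) (at (T k j))"
    by (rule field_vector_diff_chain_at[OF D]) (simp add: DERIV_exp)
  then have "vector_derivative (\<lambda>t. exp (\<Phi> (T(k := (T k)(j := t))))) (at (T k j)) = D * exp (\<Phi> T)"
    by (simp add: o_def vector_derivative_at)
  then show ?thesis using v by (simp add: pd_def mult.commute)
qed

definition PhiR :: "nat \<Rightarrow> (nat \<Rightarrow> complex) \<Rightarrow> (nat \<Rightarrow> nat \<Rightarrow> real) \<Rightarrow> complex" where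
  "PhiR N xiR T = (\<Sum>i = 1..N - 1. xiR i *
      (\<Sum>k = i..N - 1. complex_of_real (exp (Tc N T k i - Tc N T (k + 1) (i + 1)))))"

lemma psiR_eq: "psiR N xiR = (\<lambda>T. exp (PhiR N xiR T))"
  by (simp add: fun_eq_iff psiR_def PhiR_def)

lemma PhiR_deriv:
  assumes v: "1 \<le> j" "j \<le> k" "k < N"
  shows "((\<lambda>t. PhiR N xiR (T(k := (T k)(j := t)))) has_vector_derivative
     (\<Sum>i = 1..N - 1. xiR i *
      (\<Sum>k' = i..N - 1. complex_of_real (exp (Tc N T k' i - Tc N T (k' + 1) (i + 1))
          * (dl k j k' i - dl k j (k' + 1) (i + 1)))))) (at (T k j))"
  unfolding PhiR_def Tc_upd[OF v]
  by (rule derivative_eq_intros refl | simp)+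

lemma collapse_gen:
  fixes f :: "nat \<Rightarrow> nat \<Rightarrow> 'a::comm_monoid_add"
  assumes "finite A" "\<And>i. finite (B i)"
  shows "(\<Sum>i\<in>A. \<Sum>k\<in>B i. if k = a \<and> i = b then f k i else 0) = (if b \<in> A \<and> a \<in> B b then f a b else 0)"
proof -
  have "(\<Sum>k\<in>B i. if k = a \<and> i = b then f k i else 0) = (if i = b then (if a \<in> B i then f a i else 0) else 0)" for i
    using assms(2)[of i] by (cases "i = b") (auto simp: sum.delta')
  then have "(\<Sum>i\<in>A. \<Sum>k\<in>B i. if k = a \<and> i = b then f k i else 0) = (\<Sum>i\<in>A. if i = b then (if a \<in> B i then f a i else 0) else 0)"
    by simp
  also have "\<dots> = (if b \<in> A \<and> a \<in> B b then f a b else 0)"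
    using assms(1) by (auto simp: sum.delta')
  finally show ?thesis .
qed

lemma DR_val:
  assumes v: "1 \<le> j" "j \<le> k" "k < N"
  shows "pd N k j (psiR N xiR) T = psiR N xiR T *
    (xiR j * of_real (exp (Tc N T k j - Tc N T (k+1) (j+1)))
     - (if 2 \<le> j then xiR (j-1) * of_real (exp (Tc N T (k-1) (j-1) - Tc N T k j)) else 0))"
proof -
  define E where "E = (\<lambda>a b. exp (Tc N T a b - Tc N T (a + 1) (b + 1)))"
  have "pd N k j (psiR N xiR) T = psiR N xiR T *
     (\<Sum>i = 1..N - 1. xiR i *
      (\<Sum>k' = i..N - 1. complex_of_real (exp (Tc N T k' i - Tc N T (k' + 1) (i + 1))
          * (dl k j k' i - dl k j (k' + 1) (i + 1)))))"
    unfolding psiR_eq by (rule pd_exp[OF v PhiR_deriv[OF v]])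
  also have "(\<Sum>i = 1..N - 1. xiR i *
      (\<Sum>k' = i..N - 1. complex_of_real (exp (Tc N T k' i - Tc N T (k' + 1) (i + 1))
          * (dl k j k' i - dl k j (k' + 1) (i + 1)))))
     = (\<Sum>i = 1..N - 1. \<Sum>k' = i..N - 1. 
          (if k' = k \<and> i = j then xiR i * of_real (E k' i) else 0)
          - (if k' = k - 1 \<and> i = j - 1 then xiR i * of_real (E k' i) else 0))"
    unfolding sum_distrib_left
    apply (rule sum.cong[OF refl])+
    using v by (auto simp: dl_def E_def)
  also have "\<dots> = (if j \<in> {1..N-1} \<and> k \<in> {j..N-1} then xiR j * of_real (E k j) else 0)
     - (if j - 1 \<in> {1..N-1} \<and> k - 1 \<in> {j-1..N-1} then xiR (j-1) * of_real (E (k-1) (j-1)) else 0)"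
    by (simp only: sum_subtractf collapse_gen[OF finite_atLeastAtMost finite_atLeastAtMost])
  also have "\<dots> = xiR j * of_real (exp (Tc N T k j - Tc N T (k+1) (j+1)))
     - (if 2 \<le> j then xiR (j-1) * of_real (exp (Tc N T (k-1) (j-1) - Tc N T k j)) else 0)"
    using v by (auto simp: E_def)
  finally show ?thesis .
qed

definition PhiL :: "nat \<Rightarrow> real \<Rightarrow> (nat \<Rightarrow> real) \<Rightarrow> (nat \<Rightarrow> complex)
                    \<Rightarrow> (nat \<Rightarrow> nat \<Rightarrow> real) \<Rightarrow> complex" where
  "PhiL N hbar lam xiL T = (\<Sum>k = 1..N - 1. \<Sum>i = 1..k.
          (mu N hbar lam k - mu N hbar lam (k + 1)) * complex_of_real (Tc N T k i))
    + (\<Sum>i = 1..N - 1. xiL i *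
          (\<Sum>k = 1..N - i. complex_of_real (exp (Tc N T (k + i) k - Tc N T (k + i - 1) k))))"

lemma psiL_eq: "psiL N hbar lam xiL = (\<lambda>T. exp (PhiL N hbar lam xiL T))"
  by (simp add: fun_eq_iff psiL_def PhiL_def)

lemma PhiL_deriv:
  assumes v: "1 \<le> j" "j \<le> s" "s < N"
  shows "((\<lambda>t. PhiL N hbar lam xiL (T(s := (T s)(j := t)))) has_vector_derivative
     ((\<Sum>k = 1..N - 1. \<Sum>i = 1..k.
          (mu N hbar lam k - mu N hbar lam (k + 1)) * complex_of_real (dl s j k i))
    + (\<Sum>i = 1..N - 1. xiL i *
          (\<Sum>k = 1..N - i. complex_of_real (exp (Tc N T (k + i) k - Tc N T (k + i - 1) k)
             * (dl s j (k + i) k - dl s j (k + i - 1) k)))))) (at (T s j))"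
  unfolding PhiL_def Tc_upd[OF v]
  by (rule derivative_eq_intros refl | simp)+

lemma DL_val:
  assumes v: "1 \<le> j" "j \<le> s" "s < N"
  shows "pd N s j (psiL N hbar lam xiL) T = psiL N hbar lam xiL T *
    ((mu N hbar lam s - mu N hbar lam (s+1))
      + (if j < s then xiL (s-j) * of_real (exp (Tc N T s j - Tc N T (s-1) j)) else 0)
      - xiL (s+1-j) * of_real (exp (Tc N T (s+1) j - Tc N T s j)))"
proof -
  define E where "E = (\<lambda>a b. exp (Tc N T (b + a) b - Tc N T (b + a - 1) b))"
  define c where "c = (\<lambda>k. mu N hbar lam k - mu N hbar lam (k + 1))"
  have "pd N s j (psiL N hbar lam xiL) T = psiL N hbar lam xiL T *
     ((\<Sum>k = 1..N - 1. \<Sum>i = 1..k.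
          (mu N hbar lam k - mu N hbar lam (k + 1)) * complex_of_real (dl s j k i))
    + (\<Sum>i = 1..N - 1. xiL i *
          (\<Sum>k = 1..N - i. complex_of_real (exp (Tc N T (k + i) k - Tc N T (k + i - 1) k)
             * (dl s j (k + i) k - dl s j (k + i - 1) k)))))"
    unfolding psiL_eq by (rule pd_exp[OF v PhiL_deriv[OF v]])
  also have "(\<Sum>k = 1..N - 1. \<Sum>i = 1..k.
          (mu N hbar lam k - mu N hbar lam (k + 1)) * complex_of_real (dl s j k i))
     = (\<Sum>k = 1..N - 1. \<Sum>i = 1..k. if i = j \<and> k = s then c k else 0)"
    apply (rule sum.cong[OF refl])+
    by (auto simp: dl_def c_def)
  also have "\<dots> = c s"
    using v by (simp only: collapse_gen[OF finite_atLeastAtMost finite_atLeastAtMost]) simp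
  also have "(\<Sum>i = 1..N - 1. xiL i *
          (\<Sum>k = 1..N - i. complex_of_real (exp (Tc N T (k + i) k - Tc N T (k + i - 1) k)
             * (dl s j (k + i) k - dl s j (k + i - 1) k))))
     = (\<Sum>i = 1..N - 1. \<Sum>k = 1..N - i.
          (if k = j \<and> i = s - j then xiL i * of_real (E i k) else 0)
          - (if k = j \<and> i = s + 1 - j then xiL i * of_real (E i k) else 0))"
    unfolding sum_distrib_left
    apply (rule sum.cong[OF refl])+
    using v by (auto simp: dl_def E_def add.commute)
  also have "\<dots> = (if s - j \<in> {1..N-1} \<and> j \<in> {1..N-(s-j)} then xiL (s-j) * of_real (E (s-j) j) else 0)
     - (if s + 1 - j \<in> {1..N-1} \<and> j \<in> {1..N-(s+1-j)} then xiL (s+1-j) * of_real (E (s+1-j) j) else 0)"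
    by (simp only: sum_subtractf collapse_gen[OF finite_atLeastAtMost finite_atLeastAtMost])
  also have "c s + \<dots> = (mu N hbar lam s - mu N hbar lam (s+1))
      + (if j < s then xiL (s-j) * of_real (exp (Tc N T s j - Tc N T (s-1) j)) else 0)
      - xiL (s+1-j) * of_real (exp (Tc N T (s+1) j - Tc N T s j))"
    using v by (auto simp: E_def c_def)
  finally show ?thesis .
qed

lemma e1: "complex_of_real (exp (a - b)) * of_real (exp (b - c)) = of_real (exp (a - c))"
  by (simp add: exp_add[symmetric] of_real_mult[symmetric] del: of_real_mult)

lemma down_abs:
  fixes x :: "nat \<Rightarrow> nat \<Rightarrow> real" and m xi :: "nat \<Rightarrow> complex" and i M :: nat
  assumes "1 \<le> i" "i \<le> M" "x (M+1) i = 0" "x (M+1) (i+1) = 0"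
  defines "DL \<equiv> \<lambda>s j. (m s - m (s+1))
      + (if j < s then xi (s-j) * of_real (exp (x s j - x (s-1) j)) else 0)
      - xi (s+1-j) * of_real (exp (x (s+1) j - x s j))"
  shows "(\<Sum>k=i..M. complex_of_real (exp (x k i - x (k+1) (i+1)))
      * ((m i - m (i+1)) + (\<Sum>s=i..k. (if i+1 \<le> s then DL s (i+1) else 0) - DL s i)))
    = xi (M+1-i)"
proof -
  define W where "W = (\<lambda>p j. complex_of_real (exp (x p j - x (p-1) j)))"
  define Q where "Q = (\<lambda>p. complex_of_real (exp (x p i - x p (i+1))))"
  have DLW: "DL s j = (m s - m (s+1)) + (if j < s then xi (s-j) * W s j else 0) - xi (s+1-j) * W (s+1) j" for s j
    by (simp add: DL_def W_def)
  have inner: "(m i - m (i+1)) + (\<Sum>s=i..k. (if i+1 \<le> s then DL s (i+1) else 0) - DL s i)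
      = xi (k+1-i) * W (k+1) i - (if i < k then xi (k-i) * W (k+1) (i+1) else 0)" if "i \<le> k" for k
    using that
  proof (induction k rule: dec_induct)
    case base
    then show ?case by (simp add: DLW)
  next
    case (step n)
    have "(m i - m (i+1)) + (\<Sum>s=i..Suc n. (if i+1 \<le> s then DL s (i+1) else 0) - DL s i)
       = ((m i - m (i+1)) + (\<Sum>s=i..n. (if i+1 \<le> s then DL s (i+1) else 0) - DL s i))
         + (DL (Suc n) (i+1) - DL (Suc n) i)"
      using step.hyps by (simp add: algebra_simps)
    also have "\<dots> = xi (n+1-i) * W (n+1) i - (if i < n then xi (n-i) * W (n+1) (i+1) else 0)
         + (DL (Suc n) (i+1) - DL (Suc n) i)"
      using step.IH by simp
    also have "\<dots> = xi (Suc n+1-i) * W (Suc n+1) i - (if i < Suc n then xi (Suc n-i) * W (Suc n+1) (i+1) else 0)"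
      using step.hyps by (simp add: DLW Suc_diff_le)
    finally show ?case .
  qed
  have trm: "complex_of_real (exp (x k i - x (k+1) (i+1)))
      * ((m i - m (i+1)) + (\<Sum>s=i..k. (if i+1 \<le> s then DL s (i+1) else 0) - DL s i))
     = xi (k+1-i) * Q (k+1) - (if i < k then xi (k-i) * Q k else 0)" if "i \<le> k" for k
  proof -
    have a: "complex_of_real (exp (x k i - x (k+1) (i+1))) * W (k+1) i = Q (k+1)"
      unfolding W_def Q_def using e1[of "x (k+1) i" "x k i" "x (k+1) (i+1)"] by (simp add: mult.commute)
    have b: "complex_of_real (exp (x k i - x (k+1) (i+1))) * W (k+1) (i+1) = Q k"
      unfolding W_def Q_def using e1[of "x k i" "x (k+1) (i+1)" "x k (i+1)"] by simp
    have a2: "complex_of_real (exp (x k i - x (Suc k) (Suc i))) * (z * W (Suc k) i) = z * Q (Suc k)" for z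
      using a by (simp add: mult.left_commute)
    have b2: "complex_of_real (exp (x k i - x (Suc k) (Suc i))) * (z * W (Suc k) (Suc i)) = z * Q k" for z
      using b by (simp add: mult.left_commute)
    show ?thesis unfolding inner[OF that]
      by (simp add: right_diff_distrib a2 b2)
  qed
  have outer: "(\<Sum>k=i..K. xi (k+1-i) * Q (k+1) - (if i < k then xi (k-i) * Q k else 0)) = xi (K+1-i) * Q (K+1)"
    if "i \<le> K" for K
    using that
  proof (induction K rule: dec_induct)
    case base
    then show ?case by simp
  next
    case (step n)
    then show ?case by (simp add: Suc_diff_le)
  qed
  have "(\<Sum>k=i..M. complex_of_real (exp (x k i - x (k+1) (i+1)))
      * ((m i - m (i+1)) + (\<Sum>s=i..k. (if i+1 \<le> s then DL s (i+1) else 0) - DL s i)))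
    = (\<Sum>k=i..M. xi (k+1-i) * Q (k+1) - (if i < k then xi (k-i) * Q k else 0))"
    by (rule sum.cong[OF refl], rule trm) simp
  also have "\<dots> = xi (M+1-i) * Q (M+1)" using outer assms(2) by blast
  also have "\<dots> = xi (M+1-i)" using assms(3,4) by (simp add: Q_def)
  finally show ?thesis .
qed

lemma up_abs:
  fixes u v :: "nat \<Rightarrow> real" and xi :: "nat \<Rightarrow> complex"
  defines "A \<equiv> \<lambda>n. xi n * of_real (exp (u n - u (n+1)))
      - (if 2 \<le> n then xi (n-1) * of_real (exp (u (n-1) - u n)) else 0)
      - (if 2 \<le> n then xi (n-1) * of_real (exp (v (n-1) - v n))
          - (if 3 \<le> n then xi (n-2) * of_real (exp (v (n-2) - v (n-1))) else 0) else 0)"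
  shows "(\<Sum>n=1..i. (\<Sum>k=n..i. complex_of_real (exp (v k - u k))) * A n)
       = (if i = 0 then 0 else xi i * of_real (exp (v i - u (i+1))))"
proof -
  have tel: "(\<Sum>n=1..k. A n) = xi k * of_real (exp (u k - u (k+1)))
       - (if 2 \<le> k then xi (k-1) * of_real (exp (v (k-1) - v k)) else 0)" if "1 \<le> k" for k
    using that
  proof (induction k rule: dec_induct)
    case base
    then show ?case by (simp add: A_def)
  next
    case (step n)
    then show ?case by (simp add: A_def)
  qed
  show ?thesis
  proof (induction i)
    case 0
    then show ?case by simp
  next
    case (Suc i)
    have "(\<Sum>n=1..Suc i. (\<Sum>k=n..Suc i. complex_of_real (exp (v k - u k))) * A n)
        = (\<Sum>n=1..Suc i. (\<Sum>k=n..i. complex_of_real (exp (v k - u k))) * A n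
             + complex_of_real (exp (v (Suc i) - u (Suc i))) * A n)"
      by (rule sum.cong) (auto simp: distrib_right)
    also have "\<dots> = (\<Sum>n=1..i. (\<Sum>k=n..i. complex_of_real (exp (v k - u k))) * A n)
        + complex_of_real (exp (v (Suc i) - u (Suc i))) * (\<Sum>n=1..Suc i. A n)"
      by (simp add: sum.distrib sum_distrib_left distrib_left)
    also have "\<dots> = xi (Suc i) * of_real (exp (v (Suc i) - u (Suc i + 1)))"
    proof -
      have e1: "complex_of_real (exp (a - b)) * of_real (exp (b - c)) = of_real (exp (a - c))" for a b c
        by (simp add: exp_add[symmetric] of_real_mult[symmetric] del: of_real_mult)
      define V where "V = complex_of_real (exp (v (Suc i) - u (Suc i)))"
      define E1 where "E1 = complex_of_real (exp (u (Suc i) - u (Suc i+1)))"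
      define E2 where "E2 = complex_of_real (exp (v i - v (Suc i)))"
      have VE1: "V * E1 = of_real (exp (v (Suc i) - u (Suc i + 1)))" unfolding V_def E1_def by (rule e1)
      have VE1': "E1 * V = of_real (exp (v (Suc i) - u (Suc i + 1)))" using VE1 by (simp add: mult.commute)
      have VE2: "E2 * V = of_real (exp (v i - u (i + 1)))" unfolding V_def E2_def by (simp add: e1)
      have P: "(\<Sum>n=1..i. (\<Sum>k=n..i. complex_of_real (exp (v k - u k))) * A n)
          = (if i = 0 then 0 else xi i * of_real (exp (v i - u (i+1))))" by (rule Suc.IH)
      have S: "(\<Sum>n=1..Suc i. A n) = xi (Suc i) * E1 - (if 1 \<le> i then xi i * E2 else 0)"
        using tel[of "Suc i"] by (simp add: E1_def E2_def)
      show ?thesis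
      proof (cases "i = 0")
        case True
        then show ?thesis unfolding P S V_def[symmetric] by (simp add: algebra_simps VE1')
      next
        case False
        have alg: "V * (xi (Suc i) * E1 - xi i * E2) = xi (Suc i) * (V * E1) - xi i * (E2 * V)"
          by (simp add: algebra_simps)
        from False show ?thesis unfolding P S V_def[symmetric]
          by (simp add: alg VE1 VE2)
      qed
    qed
    finally show ?case by simp
  qed
qed

theorem proposition2:
  fixes N :: nat and hbar :: real and lam :: "nat \<Rightarrow> real"
    and xiR xiL :: "nat \<Rightarrow> complex" and i :: nat and T :: "nat \<Rightarrow> nat \<Rightarrow> real"
  assumes "N \<ge> 2" and "hbar > 0"
    and "\<forall>j \<in> {1..N - 1}. xiR j \<noteq> 0 \<and> xiL j \<noteq> 0"
    and "i \<in> {1..N - 1}"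
  shows "E_up N i (psiR N xiR) T = xiR i * psiR N xiR T
       \<and> E_down N hbar lam i (psiL N hbar lam xiL) T = xiL (N - i) * psiL N hbar lam xiL T"
proof
  have i1: "1 \<le> i" "i \<le> N - 1" "i < N" using assms(1,4) by auto
  define u where "u = (\<lambda>n. Tc N T (N - i + n - 1) n)"
  define v where "v = (\<lambda>n. Tc N T (N - i + n) n)"
  define A where "A = (\<lambda>n. xiR n * of_real (exp (u n - u (n+1)))
      - (if 2 \<le> n then xiR (n-1) * of_real (exp (u (n-1) - u n)) else 0)
      - (if 2 \<le> n then xiR (n-1) * of_real (exp (v (n-1) - v n))
          - (if 3 \<le> n then xiR (n-2) * of_real (exp (v (n-2) - v (n-1))) else 0) else 0))"
  define P where "P = psiR N xiR T"
  have step: "(\<Sum>k = n..i. complex_of_real (exp (Tc N T (N + k - i) k - Tc N T (N + k - i - 1) k)))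
      * (pd N (N + n - i - 1) n (psiR N xiR) T - pd N (N + n - i - 1) (n - 1) (psiR N xiR) T)
     = P * ((\<Sum>k=n..i. complex_of_real (exp (v k - u k))) * A n)" if n: "n \<in> {1..i}" for n
  proof -
    have c: "(\<Sum>k = n..i. complex_of_real (exp (Tc N T (N + k - i) k - Tc N T (N + k - i - 1) k)))
       = (\<Sum>k=n..i. complex_of_real (exp (v k - u k)))"
      apply (rule sum.cong[OF refl])
      using i1 by (simp add: u_def v_def)
    have p1: "pd N (N + n - i - 1) n (psiR N xiR) T = P * (xiR n * of_real (exp (u n - u (n+1)))
      - (if 2 \<le> n then xiR (n-1) * of_real (exp (u (n-1) - u n)) else 0))"
    proof -
      have "pd N (N + n - i - 1) n (psiR N xiR) T = P *
        (xiR n * of_real (exp (Tc N T (N + n - i - 1) n - Tc N T (N + n - i - 1 + 1) (n + 1)))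
          - (if 2 \<le> n then xiR (n - 1) * of_real (exp (Tc N T (N + n - i - 1 - 1) (n - 1) - Tc N T (N + n - i - 1) n)) else 0))"
        unfolding P_def by (rule DR_val) (use n i1 in auto)
      also have "\<dots> = P * (xiR n * of_real (exp (u n - u (n+1)))
      - (if 2 \<le> n then xiR (n-1) * of_real (exp (u (n-1) - u n)) else 0))"
      proof -
        have u1: "Tc N T (N + n - i - 1) n = u n"
          unfolding u_def by (rule arg_cong[of _ _ "\<lambda>a. Tc N T a n"]) (use n i1 in arith)
        have u2: "Tc N T (N + n - i - 1 + 1) (n + 1) = u (n + 1)"
          unfolding u_def by (rule arg_cong[of _ _ "\<lambda>a. Tc N T a (n + 1)"]) (use n i1 in arith)
        have u3: "2 \<le> n \<Longrightarrow> Tc N T (N + n - i - 1 - 1) (n - 1) = u (n - 1)"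
          unfolding u_def by (rule arg_cong[of _ _ "\<lambda>a. Tc N T a (n - 1)"]) (use n i1 in arith)
        show ?thesis by (cases "2 \<le> n") (simp_all only: u1 u2 u3 if_True if_False)
      qed
      finally show ?thesis .
    qed
    have p2: "pd N (N + n - i - 1) (n - 1) (psiR N xiR) T = P *
       (if 2 \<le> n then xiR (n-1) * of_real (exp (v (n-1) - v n))
          - (if 3 \<le> n then xiR (n-2) * of_real (exp (v (n-2) - v (n-1))) else 0) else 0)"
    proof (cases "2 \<le> n")
      case True
      have "pd N (N + n - i - 1) (n - 1) (psiR N xiR) T = P *
        (xiR (n - 1) * of_real (exp (Tc N T (N + n - i - 1) (n - 1) - Tc N T (N + n - i - 1 + 1) (n - 1 + 1)))
          - (if 2 \<le> n - 1 then xiR (n - 1 - 1) * of_real (exp (Tc N T (N + n - i - 1 - 1) (n - 1 - 1) - Tc N T (N + n - i - 1) (n - 1))) else 0))"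
        unfolding P_def by (rule DR_val) (use n i1 True in auto)
      also have "\<dots> = P * (if 2 \<le> n then xiR (n-1) * of_real (exp (v (n-1) - v n))
          - (if 3 \<le> n then xiR (n-2) * of_real (exp (v (n-2) - v (n-1))) else 0) else 0)"
      proof -
        have v1: "Tc N T (N + n - i - 1) (n - 1) = v (n - 1)"
          unfolding v_def by (rule arg_cong[of _ _ "\<lambda>a. Tc N T a (n - 1)"]) (use n i1 True in arith)
        have v2: "Tc N T (N + n - i - 1 + 1) (n - 1 + 1) = v n"
        proof -
          have "n - 1 + 1 = n" using True by arith
          then show ?thesis
            unfolding v_def by (simp only:) (rule arg_cong[of _ _ "\<lambda>a. Tc N T a n"], use n i1 True in arith)
        qed
        have v3: "Tc N T (N + n - i - 1 - 1) (n - 2) = v (n - 2)"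
          unfolding v_def by (rule arg_cong[of _ _ "\<lambda>a. Tc N T a (n - 2)"]) (use n i1 True in arith)
        have n3: "(2 \<le> n - 1) = (3 \<le> n)" "n - 1 - 1 = n - 2" by auto
        show ?thesis using True by (simp only: v1 v2 v3 n3 if_True)
      qed
      finally show ?thesis .
    next
      case False
      then show ?thesis by (simp add: pd_def)
    qed
    show ?thesis unfolding c p1 p2 A_def by (simp add: algebra_simps)
  qed
  have "E_up N i (psiR N xiR) T = P * (\<Sum>n=1..i. (\<Sum>k=n..i. complex_of_real (exp (v k - u k))) * A n)"
    unfolding E_up_def sum_distrib_left by (rule sum.cong[OF refl], rule step)
  also have "\<dots> = P * (if i = 0 then 0 else xiR i * of_real (exp (v i - u (i+1))))"
    unfolding A_def by (subst up_abs) (rule refl)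
  also have "\<dots> = xiR i * P"
    using i1 by (simp add: u_def v_def Tc_def)
  finally show "E_up N i (psiR N xiR) T = xiR i * psiR N xiR T" by (simp add: P_def)
next
  show "E_down N hbar lam i (psiL N hbar lam xiL) T = xiL (N - i) * psiL N hbar lam xiL T"
  proof -
    have i1: "1 \<le> i" "i \<le> N - 1" "i < N" using assms(1,4) by auto
    define Q where "Q = psiL N hbar lam xiL T"
    define m where "m = mu N hbar lam"
    define x where "x = Tc N T"
    define DL where "DL = (\<lambda>s j. (m s - m (s+1))
      + (if j < s then xiL (s-j) * of_real (exp (x s j - x (s-1) j)) else 0)
      - xiL (s+1-j) * of_real (exp (x (s+1) j - x s j)))"
    have pdL: "pd N s j (psiL N hbar lam xiL) T = Q * DL s j" if "1 \<le> j" "j \<le> s" "s < N" for s j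
      unfolding Q_def DL_def m_def x_def by (rule DL_val[OF that])
    have inner: "(mu N hbar lam i - mu N hbar lam (i + 1)) * psiL N hbar lam xiL T
         + (\<Sum>s = i..k. pd N s (i + 1) (psiL N hbar lam xiL) T - pd N s i (psiL N hbar lam xiL) T)
       = Q * ((m i - m (i+1)) + (\<Sum>s=i..k. (if i+1 \<le> s then DL s (i+1) else 0) - DL s i))"
      if k: "k \<in> {i..N-1}" for k
    proof -
      have "(\<Sum>s = i..k. pd N s (i + 1) (psiL N hbar lam xiL) T - pd N s i (psiL N hbar lam xiL) T)
          = (\<Sum>s=i..k. Q * ((if i+1 \<le> s then DL s (i+1) else 0) - DL s i))"
      proof (rule sum.cong[OF refl])
        fix s assume s: "s \<in> {i..k}"
        show "pd N s (i + 1) (psiL N hbar lam xiL) T - pd N s i (psiL N hbar lam xiL) T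
            = Q * ((if i+1 \<le> s then DL s (i+1) else 0) - DL s i)"
        proof (cases "i + 1 \<le> s")
          case True
          then show ?thesis using s k i1 by (simp add: pdL right_diff_distrib)
        next
          case False
          have z: "pd N s (i + 1) (psiL N hbar lam xiL) T = 0" unfolding pd_def using False by auto
          have w: "pd N s i (psiL N hbar lam xiL) T = Q * DL s i" using s k i1 by (intro pdL) auto
          show ?thesis using False by (simp only: z w) simp
        qed
      qed
      then show ?thesis by (simp only: sum_distrib_left[symmetric]) (simp add: Q_def m_def distrib_left mult.commute)
    qed
    have "E_down N hbar lam i (psiL N hbar lam xiL) T
       = Q * (\<Sum>k=i..N-1. complex_of_real (exp (x k i - x (k+1) (i+1)))
           * ((m i - m (i+1)) + (\<Sum>s=i..k. (if i+1 \<le> s then DL s (i+1) else 0) - DL s i)))"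
      unfolding E_down_def sum_distrib_left
    proof (rule sum.cong[OF refl])
      fix k assume k: "k \<in> {i..N - 1}"
      show "complex_of_real (exp (Tc N T k i - Tc N T (k + 1) (i + 1))) *
          ((mu N hbar lam i - mu N hbar lam (i + 1)) * psiL N hbar lam xiL T
         + (\<Sum>s = i..k. pd N s (i + 1) (psiL N hbar lam xiL) T - pd N s i (psiL N hbar lam xiL) T))
        = Q * (complex_of_real (exp (x k i - x (k+1) (i+1)))
           * ((m i - m (i+1)) + (\<Sum>s=i..k. (if i+1 \<le> s then DL s (i+1) else 0) - DL s i)))"
        unfolding inner[OF k] x_def by (rule mult.left_commute)
    qed
    also have "\<dots> = Q * xiL (N - 1 + 1 - i)"
      unfolding DL_def by (subst down_abs) (use i1 assms(1) in \<open>auto simp: x_def Tc_def\<close>)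
    also have "\<dots> = xiL (N - i) * Q" using assms(1) by simp
    finally show ?thesis by (simp add: Q_def)
  qed
qed

end
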